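(* Let $b\ge2$, $t\ge1$ and $n\ge(t+1)b-1$. Then \[ N^-_{2,b}(n,t)=D_{2,b}(n,t)-D_{2,b}(n-b,t)+D_{2,b}(n-3b,t-2)=D_{2,b}(n,t)-\binom{n-(t+1)b+1}{t}, \] where $D_{2,b}(n,t)=\sum_{i=0}^{t}\binom{n-bt}{i}$.
   Context: $\Sigma_2=\{0,1\}$. A $b$-burst-deletion at position $i\in[1,n-b+1]$ transforms $x_1\cdots x_n$ into $x_1\cdots x_{i-1}x_{i+b}\cdots x_n$. For $n\ge tb+1$, $t\ge0$, $\mathcal{D}_{t,b}(\boldsymbol{x})$ is the set of all length-$(n-tb)$ sequences obtainable from $\boldsymbol{x}$ by $t$ successive $b$-burst-deletions ($\mathcal{D}_{0,b}(\boldsymbol{x})=\{\boldsymbol{x}\}$). For $m\ge bs+1$, $s\ge0$: $D_{2,b}(m,s)=\max\{|\mathcal{D}_{s,b}(\boldsymbol{x})|:\boldsymbol{x}\in\Sigma_2^m\}$; conventions $D_{2,b}(m,s)=1$ if $m=bs\ge0$, and $D_{2,b}(m,s)=0$ if $m<bs$ or $s<0$. $N^-_{2,b}(n,t)=\max\{|\mathcal{D}_{t,b}(\boldsymbol{x})\cap\mathcal{D}_{t,b}(\boldsymbol{y})|:\boldsymbol{x}\ne\boldsymbol{y}\in\Sigma_2^n\}$. Convention: $\binom{m}{i}=0$ if $m<i$. *)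

theory Defs
  imports Main
begin

text \<open>Binary sequences are lists over bool (Sigma_2 = {0,1} identified with {False,True}).
  A b-burst-deletion removes b consecutive symbols; position i (0-indexed here) ranges
  over 0 .. length y - b, i.e. 1-indexed positions 1 .. n-b+1.\<close>

definition burst_del :: "nat \<Rightarrow> 'a list \<Rightarrow> 'a list set" where
  "burst_del b y = {take i y @ drop (i + b) y | i. i + b \<le> length y}"

fun burst_dels :: "nat \<Rightarrow> nat \<Rightarrow> 'a list \<Rightarrow> 'a list set" where
  "burst_dels b 0 x = {x}"
| "burst_dels b (Suc t) x = (\<Union>y \<in> burst_dels b t x. burst_del b y)"

text \<open>D_{2,b}(m,s), with integer arguments to accommodate the conventions
  (value 1 if m = bs >= 0, value 0 if m < bs or s < 0).\<close>
definition Dmax :: "nat \<Rightarrow> int \<Rightarrow> int \<Rightarrow> nat" where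
  "Dmax b m s =
     (if s < 0 \<or> m < int b * s then 0
      else if m = int b * s then 1
      else Max {card (burst_dels b (nat s) x) | x :: bool list. length x = nat m})"

definition Nminus :: "nat \<Rightarrow> nat \<Rightarrow> nat \<Rightarrow> nat" where
  "Nminus b n t = Max {card (burst_dels b t x \<inter> burst_dels b t y) | x y :: bool list.
      length x = n \<and> length y = n \<and> x \<noteq> y}"

end

theory Submission
  imports Defs
begin

lemma bd_len: "z \<in> burst_dels b t x \<Longrightarrow> length z + b*t = length x"
proof (induction t arbitrary: z)
  case 0 then show ?case by simp
next
  case (Suc t)
  then obtain y where y: "y \<in> burst_dels b t x" "z \<in> burst_del b y" by auto
  then obtain i where "z = take i y @ drop (i+b) y" "i + b \<le> length y" unfolding burst_del_def by auto
  then have "length z + b = length y" by simp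
  with Suc.IH[OF y(1)] show ?case by simp
qed

lemma burst_del_fin: "finite (burst_del b y)"
proof -
  have "burst_del b y \<subseteq> (\<lambda>i. take i y @ drop (i+b) y) ` {..length y}"
    unfolding burst_del_def by auto
  then show ?thesis by (rule finite_subset) simp
qed

lemma bd_fin: "finite (burst_dels b t x)"
  by (induction t) (auto simp: burst_del_fin)

lemma drop_in_bd: "b \<le> length x \<Longrightarrow> drop b x \<in> burst_del b x"
  unfolding burst_del_def mem_Collect_eq by (intro exI[of _ 0]) simp

lemma bd_ne: "b*t \<le> length x \<Longrightarrow> burst_dels b t x \<noteq> {}"
proof (induction t)
  case 0 then show ?case by simp
next
  case (Suc t)
  have bb: "b + b*t \<le> length x" using Suc.prems by simp
  have "b*t \<le> length x" using bb by linarith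
  then have "burst_dels b t x \<noteq> {}" by (rule Suc.IH)
  then obtain y where y: "y \<in> burst_dels b t x" by blast
  have "length y + b*t = length x" using bd_len[OF y] .
  then have "b \<le> length y" using bb by linarith
  then have "drop b y \<in> burst_del b y" by (rule drop_in_bd)
  then show ?case using y by (simp only: burst_dels.simps) blast
qed

lemma bd_single: "b*t = length x \<Longrightarrow> burst_dels b t x = {[]}"
proof -
  assume h: "b*t = length x"
  have a: "z = []" if "z \<in> burst_dels b t x" for z
    using bd_len[OF that] h by simp
  have "burst_dels b t x \<noteq> {}" using bd_ne[of b t x] h by simp
  with a show ?thesis by blast
qed

lemma bd_iter: "burst_dels b (Suc t) x = (\<Union>y\<in>burst_del b x. burst_dels b t y)"
proof (induction t)
  case 0 then show ?case by simp
next
  case (Suc t)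
  have "burst_dels b (Suc (Suc t)) x = (\<Union>y\<in>burst_dels b (Suc t) x. burst_del b y)" by simp
  also have "\<dots> = (\<Union>w\<in>burst_del b x. \<Union>y\<in>burst_dels b t w. burst_del b y)"
    using Suc.IH by (simp add: UN_UN_flatten)
  also have "\<dots> = (\<Union>w\<in>burst_del b x. burst_dels b (Suc t) w)" by simp
  finally show ?case .
qed

lemma bd_step: "w \<in> burst_del b x \<Longrightarrow> z \<in> burst_dels b t w \<Longrightarrow> z \<in> burst_dels b (Suc t) x"
  unfolding bd_iter[of b t x] by blast


lemma bd_cons: "z \<in> burst_dels b t w \<Longrightarrow> a#z \<in> burst_dels b t (a#w)"
proof (induction t arbitrary: z)
  case 0 then show ?case by simp
next
  case (Suc t)
  then obtain y where y: "y \<in> burst_dels b t w" "z \<in> burst_del b y" by auto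
  then obtain i where i: "z = take i y @ drop (i+b) y" "i + b \<le> length y" unfolding burst_del_def by auto
  have "a#z = take (Suc i) (a#y) @ drop (Suc i + b) (a#y)" "Suc i + b \<le> length (a#y)" using i by auto
  then have "a#z \<in> burst_del b (a#y)" unfolding burst_del_def by blast
  with Suc.IH[OF y(1)] show ?case by auto
qed

lemma bd_drop: "b \<le> length x \<Longrightarrow> z \<in> burst_dels b t (drop b x) \<Longrightarrow> z \<in> burst_dels b (Suc t) x"
  using bd_step drop_in_bd by blast


lemma drop_burst:
  assumes "j + b \<le> length v" "k + b \<le> length v"
  shows "drop k (take j v @ drop (j+b) v) \<in> burst_del b (drop k v)"
proof (cases "k \<le> j")
  case True
  have "drop k (take j v @ drop (j+b) v) = take (j-k) (drop k v) @ drop ((j-k)+b) (drop k v)"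
    using True assms by (simp add: drop_take)
  moreover have "(j-k) + b \<le> length (drop k v)" using True assms by simp
  ultimately show ?thesis unfolding burst_del_def by blast
next
  case False
  have "drop k (take j v @ drop (j+b) v) = drop (k+b) v"
    using False assms by simp
  also have "\<dots> = drop b (drop k v)" by (simp add: add.commute)
  finally show ?thesis using drop_in_bd[of b "drop k v"] assms by simp
qed

lemma bd_rec:
  assumes "1 \<le> b" "z \<in> burst_dels b (Suc t) x"
  shows "(x \<noteq> [] \<and> z = hd x # tl z \<and> tl z \<in> burst_dels b (Suc t) (tl x)) \<or> z \<in> burst_dels b t (drop b x)"
  using assms(2)
proof (induction t arbitrary: x z)
  case 0
  then have "z \<in> burst_del b x" by simp
  then obtain i where i: "z = take i x @ drop (i+b) x" "i + b \<le> length x"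
    unfolding burst_del_def by auto
  show ?case
  proof (cases i)
    case 0 then show ?thesis using i by simp
  next
    case (Suc j)
    have xne: "x \<noteq> []" using i Suc by auto
    then obtain a x' where x: "x = a#x'" by (cases x) auto
    have "tl z = take j x' @ drop (j+b) x'" "j+b \<le> length x'" using i x Suc by auto
    then have "tl z \<in> burst_del b x'" unfolding burst_del_def by blast
    moreover have "z = a # tl z" using i x Suc by simp
    ultimately show ?thesis using x by simp
  qed
next
  case (Suc t)
  have "z \<in> (\<Union>y\<in>burst_del b x. burst_dels b (Suc t) y)"
    using Suc.prems bd_iter[of b "Suc t" x] by (simp only:)
  then obtain y where y: "y \<in> burst_del b x" "z \<in> burst_dels b (Suc t) y" by blast
  then obtain i where i: "y = take i x @ drop (i+b) x" "i + b \<le> length x"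
    unfolding burst_del_def by auto
  show ?case
  proof (cases i)
    case 0 then show ?thesis using i y by simp
  next
    case (Suc j)
    have xne: "x \<noteq> []" using i Suc by auto
    then obtain a x' where x: "x = a#x'" by (cases x) auto
    define w where "w = take j x' @ drop (j+b) x'"
    have jb: "j+b \<le> length x'" using i x Suc by auto
    have yw: "y = a # w" using i x Suc w_def by simp
    have wx': "w \<in> burst_del b x'" unfolding burst_del_def w_def using jb by blast
    from Suc.IH[OF y(2)] show ?thesis
    proof
      assume h: "y \<noteq> [] \<and> z = hd y # tl z \<and> tl z \<in> burst_dels b (Suc t) (tl y)"
      then have "tl z \<in> burst_dels b (Suc t) w" using yw by simp
      then have "tl z \<in> burst_dels b (Suc (Suc t)) x'" using wx' bd_step by blast
      then show ?thesis using h x yw by simp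
    next
      assume h: "z \<in> burst_dels b t (drop b y)"
      have lz: "length z + b*t = length (drop b y)" using bd_len[OF h] .
      have "drop b y = drop (b-1) w" using yw assms(1) by (cases b) auto
      moreover have "drop (b-1) w \<in> burst_del b (drop (b-1) x')"
        unfolding w_def
      proof (rule drop_burst[OF jb])
        have "length y + b = length x" using i by simp
        moreover have "length z + b * Suc t = length y" using bd_len[OF y(2)] .
        ultimately show "b - 1 + b \<le> length x'" using x assms(1) by simp
      qed
      moreover have "drop (b-1) x' = drop b x" using x assms(1) by (cases b) auto
      ultimately have "z \<in> burst_dels b (Suc t) (drop b x)" using h bd_step by metis
      then show ?thesis by simp
    qed
  qed
qed


lemma bd_tail:
  assumes "1 \<le> b" "a#z \<in> burst_dels b s u"
  shows "z \<in> burst_dels b s (tl u)"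
  using assms(2)
proof (induction s arbitrary: u z)
  case 0 then show ?case by auto
next
  case (Suc s)
  from bd_rec[OF assms(1) Suc.prems] show ?case
  proof
    assume "u \<noteq> [] \<and> a # z = hd u # tl (a # z) \<and> tl (a # z) \<in> burst_dels b (Suc s) (tl u)"
    then show ?thesis by simp
  next
    assume h: "a # z \<in> burst_dels b s (drop b u)"
    have "z \<in> burst_dels b s (tl (drop b u))" by (rule Suc.IH[OF h])
    moreover have "tl (drop b u) = drop b (tl u)" by (simp add: drop_tl)
    moreover have "b \<le> length (tl u)" using bd_len[OF h] by simp
    ultimately show ?thesis using bd_drop by metis
  qed
qed

definition SS :: "nat \<Rightarrow> 'a \<Rightarrow> nat \<Rightarrow> 'a list \<Rightarrow> 'a list set" where
  "SS b c s x = {z. c#z \<in> burst_dels b s x}"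

lemma SS_fin: "finite (SS b c s x)"
proof -
  have "SS b c s x = Cons c -` burst_dels b s x" unfolding SS_def by auto
  then show ?thesis using finite_vimageI[OF bd_fin, of "Cons c"] by (simp add: inj_on_def)
qed

lemma S_sub: "1 \<le> b \<Longrightarrow> SS b c s x \<subseteq> burst_dels b s (tl x)"
  unfolding SS_def using bd_tail[of b c _ s x] by auto

lemma S_same: "1 \<le> b \<Longrightarrow> SS b a s (a#x') = burst_dels b s x'"
proof
  assume "1 \<le> b" then show "SS b a s (a#x') \<subseteq> burst_dels b s x'" using S_sub[of b a s "a#x'"] by simp
next
  show "burst_dels b s x' \<subseteq> SS b a s (a#x')" unfolding SS_def by (auto intro: bd_cons)
qed

lemma S_diff:
  assumes "1 \<le> b" "a \<noteq> c"
  shows "SS b c (Suc s) (a#x') = SS b c s (drop b (a#x'))"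
proof
  show "SS b c (Suc s) (a#x') \<subseteq> SS b c s (drop b (a#x'))"
  proof
    fix z assume "z \<in> SS b c (Suc s) (a#x')"
    then have h: "c#z \<in> burst_dels b (Suc s) (a#x')" unfolding SS_def by simp
    from bd_rec[OF assms(1) h] assms(2) have "c#z \<in> burst_dels b s (drop b (a#x'))" by auto
    then show "z \<in> SS b c s (drop b (a#x'))" unfolding SS_def by simp
  qed
next
  show "SS b c s (drop b (a#x')) \<subseteq> SS b c (Suc s) (a#x')"
  proof
    fix z assume "z \<in> SS b c s (drop b (a#x'))"
    then have h: "c#z \<in> burst_dels b s (drop b (a#x'))" unfolding SS_def by simp
    have "b \<le> length (a#x')" using bd_len[OF h] by simp
    then have "c#z \<in> burst_dels b (Suc s) (a#x')" using bd_drop h by blast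
    then show "z \<in> SS b c (Suc s) (a#x')" unfolding SS_def by simp
  qed
qed

lemma S_zero: "SS b c 0 x = (if x \<noteq> [] \<and> hd x = c then {tl x} else {})"
  unfolding SS_def by (cases x) auto

lemma card_split:
  fixes A :: "bool list set"
  assumes "finite A" "[] \<notin> A"
  shows "card A = card {z. True#z \<in> A} + card {z. False#z \<in> A}"
proof -
  have fin: "finite {z. c#z \<in> A}" for c
  proof -
    have "{z. c#z \<in> A} = Cons c -` A" by auto
    then show ?thesis using finite_vimageI[OF assms(1), of "Cons c"] by (simp add: inj_on_def)
  qed
  have "A = Cons True ` {z. True#z \<in> A} \<union> Cons False ` {z. False#z \<in> A}"
  proof
    show "A \<subseteq> Cons True ` {z. True#z \<in> A} \<union> Cons False ` {z. False#z \<in> A}"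
    proof
      fix w assume w: "w \<in> A"
      then obtain c z where "w = c#z" using assms(2) by (cases w) auto
      then show "w \<in> Cons True ` {z. True#z \<in> A} \<union> Cons False ` {z. False#z \<in> A}"
        using w by (cases c) auto
    qed
  qed auto
  then have "card A = card (Cons True ` {z. True#z \<in> A} \<union> Cons False ` {z. False#z \<in> A})" by simp
  also have "\<dots> = card (Cons True ` {z. True#z \<in> A}) + card (Cons False ` {z. False#z \<in> A})"
    by (rule card_Un_disjoint) (auto simp: fin)
  also have "\<dots> = card {z. True#z \<in> A} + card {z. False#z \<in> A}"
    by (simp add: card_image inj_on_def)
  finally show ?thesis .
qed

lemma card_split2:
  fixes A :: "bool list set"
  assumes "finite A" "[] \<notin> A"
  shows "card A = card {z. a#z \<in> A} + card {z. (\<not>a)#z \<in> A}"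
  using card_split[OF assms] by (cases a) auto

lemma tl_drop_cons: "1 \<le> b \<Longrightarrow> tl (drop b (a#x')) = drop b x'"
  by (cases b) (simp_all add: drop_Suc drop_tl)

definition FF :: "nat \<Rightarrow> nat \<Rightarrow> nat" where
  "FF m t = (\<Sum>i=0..t. m choose i)"

lemma FF_0[simp]: "FF m 0 = 1" unfolding FF_def by simp

lemma FF_Suc: "FF m (Suc t) = FF m t + (m choose Suc t)"
  unfolding FF_def by simp

lemma FF_zero_m[simp]: "FF 0 t = 1"
  by (induction t) (simp_all add: FF_Suc)

lemma FF_pascal: "FF (Suc m) (Suc t) = FF m (Suc t) + FF m t"
proof (induction t)
  case 0 then show ?case by (simp add: FF_Suc)
next
  case (Suc t)
  have "FF (Suc m) (Suc (Suc t)) = FF (Suc m) (Suc t) + (Suc m choose Suc (Suc t))" by (simp add: FF_Suc)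
  also have "\<dots> = FF m (Suc t) + FF m t + (m choose Suc t) + (m choose Suc (Suc t))"
    using Suc by simp
  also have "\<dots> = FF m (Suc (Suc t)) + FF m (Suc t)" by (simp add: FF_Suc)
  finally show ?case .
qed

lemma FF_ge1: "1 \<le> FF m t"
  by (induction t) (simp_all add: FF_Suc)

lemma B_split:
  fixes x :: "bool list"
  assumes "1 \<le> b" "b*t < length x"
  shows "card (burst_dels b t x) = card (burst_dels b t (tl x)) + card (SS b (\<not> hd x) t x)"
proof -
  obtain a x' where x: "x = a#x'" using assms(2) by (cases x) auto
  have ne: "[] \<notin> burst_dels b t x" using bd_len assms(2) by fastforce
  have "card (burst_dels b t x) = card (SS b a t x) + card (SS b (\<not>a) t x)"
    unfolding SS_def by (rule card_split2[OF bd_fin ne])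
  then show ?thesis using S_same[OF assms(1), of a t x'] x by simp
qed

lemma D_ub:
  fixes x :: "bool list"
  assumes "1 \<le> b" "b*t \<le> length x"
  shows "card (burst_dels b t x) \<le> FF (length x - b*t) t"
  using assms(2)
proof (induction "length x" arbitrary: x t rule: less_induct)
  case less
  show ?case
  proof (cases "b*t = length x")
    case True
    then show ?thesis using bd_single[OF True] FF_ge1 by simp
  next
    case False
    then have lt: "b*t < length x" using less.prems by simp
    show ?thesis
    proof (cases t)
      case 0 then show ?thesis by simp
    next
      case (Suc s)
      obtain a x' where x: "x = a#x'" using lt by (cases x) auto
      have c1: "card (burst_dels b t x') \<le> FF (length x' - b*t) t"
        using less.hyps[of x' t] lt x by simp
      have "SS b (\<not>a) t x = SS b (\<not>a) s (drop b x)" using S_diff[OF assms(1), of a "\<not>a" s x'] Suc x by simp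
      also have "\<dots> \<subseteq> burst_dels b s (tl (drop b x))" by (rule S_sub[OF assms(1)])
      finally have sub0: "SS b (\<not>a) t x \<subseteq> burst_dels b s (tl (drop b x))" .
      have e: "tl (drop b x) = drop b x'" using x tl_drop_cons[OF assms(1), of a x'] by (simp only:)
      have sub: "SS b (\<not>a) t x \<subseteq> burst_dels b s (drop b x')" using sub0 unfolding e .
      have "length x' - b*t = length (drop b x') - b*s" using Suc by simp
      moreover have "card (burst_dels b s (drop b x')) \<le> FF (length (drop b x') - b*s) s"
        using less.hyps[of "drop b x'" s] lt x Suc assms(1) by simp
      ultimately have c2: "card (SS b (\<not>a) t x) \<le> FF (length x' - b*t) s"
        using card_mono[OF bd_fin sub] by simp
      have "card (burst_dels b t x) = card (burst_dels b t x') + card (SS b (\<not>a) t x)"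
        using B_split[OF assms(1) lt] x by simp
      also have "\<dots> \<le> FF (length x' - b*t) (Suc s) + FF (length x' - b*t) s" using c1 c2 Suc by simp
      also have "\<dots> = FF (Suc (length x' - b*t)) (Suc s)" by (simp add: FF_pascal)
      also have "Suc (length x' - b*t) = length x - b*t" using lt x by simp
      finally show ?thesis using Suc by simp
    qed
  qed
qed


definition alt :: "nat \<Rightarrow> bool list \<Rightarrow> bool" where
  "alt b v = (\<forall>k. k + b < length v \<longrightarrow> v!k \<noteq> v!(k+b))"

lemma alt_drop: "alt b v \<Longrightarrow> alt b (drop j v)"
  unfolding alt_def
proof (intro allI impI)
  fix k assume a: "\<forall>k. k + b < length v \<longrightarrow> v ! k \<noteq> v ! (k + b)" and k: "k + b < length (drop j v)"
  have "j + k + b < length v" using k by simp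
  then have "v!(j+k) \<noteq> v!(j+k+b)" using a by blast
  then show "drop j v ! k \<noteq> drop j v ! (k + b)" using k by (simp add: add.assoc)
qed

lemma S_alt_eq:
  assumes "1 \<le> b" "alt b v" "b * Suc s < length v" "c \<noteq> v!0"
  shows "SS b c (Suc s) v = burst_dels b s (drop (Suc b) v)"
proof -
  obtain a v' where v: "v = a#v'" using assms(3) by (cases v) auto
  have ca: "a \<noteq> c" using assms(4) v by simp
  have bl: "b < length v" using assms(3) by simp
  have bl0: "0 + b < length v" using bl by simp
  have "v!0 \<noteq> v!(0+b)" using assms(2) bl0 unfolding alt_def by blast
  then have vb: "v!b = c" using assms(4) by auto
  have "SS b c (Suc s) v = SS b c s (drop b v)" using S_diff[OF assms(1) ca] v by simp
  also have "drop b v = c # drop (Suc b) v" using Cons_nth_drop_Suc[OF bl] vb by simp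
  also have "SS b c s (c # drop (Suc b) v) = burst_dels b s (drop (Suc b) v)" by (rule S_same[OF assms(1)])
  finally show ?thesis .
qed

lemma D_exact:
  assumes "1 \<le> b" "alt b x" "b*t \<le> length x"
  shows "card (burst_dels b t x) = FF (length x - b*t) t"
  using assms(2,3)
proof (induction "length x" arbitrary: x t rule: less_induct)
  case less
  show ?case
  proof (cases "b*t = length x")
    case True
    then show ?thesis using bd_single[OF True] by simp
  next
    case False
    then have lt: "b*t < length x" using less.prems by simp
    show ?thesis
    proof (cases t)
      case 0 then show ?thesis by simp
    next
      case (Suc s)
      obtain a x' where x: "x = a#x'" using lt by (cases x) auto
      have ax': "alt b x'" using alt_drop[OF less.prems(1), of 1] x by simp
      have c1: "card (burst_dels b t x') = FF (length x' - b*t) t"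
        using less.hyps[of x' t] lt x ax' by simp
      have eq: "SS b (\<not>a) t x = burst_dels b s (drop (Suc b) x)"
        using S_alt_eq[OF assms(1) less.prems(1), of s "\<not>a"] lt Suc x by simp
      have "length x' - b*t = length (drop (Suc b) x) - b*s" using Suc x by simp
      moreover have "card (burst_dels b s (drop (Suc b) x)) = FF (length (drop (Suc b) x) - b*s) s"
        using less.hyps[of "drop (Suc b) x" s] lt x Suc assms(1) alt_drop[OF less.prems(1), of "Suc b"] by simp
      ultimately have c2: "card (SS b (\<not>a) t x) = FF (length x' - b*t) s" using eq by simp
      have "card (burst_dels b t x) = card (burst_dels b t x') + card (SS b (\<not>a) t x)"
        using B_split[OF assms(1) lt] x by simp
      also have "\<dots> = FF (length x' - b*t) (Suc s) + FF (length x' - b*t) s" using c1 c2 Suc by simp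
      also have "\<dots> = FF (Suc (length x' - b*t)) (Suc s)" by (simp add: FF_pascal)
      also have "Suc (length x' - b*t) = length x - b*t" using lt x by simp
      finally show ?thesis using Suc by simp
    qed
  qed
qed

definition altw :: "nat \<Rightarrow> nat \<Rightarrow> bool list" where
  "altw b n = map (\<lambda>k. odd (k div b)) [0..<n]"

lemma altw_alt: "1 \<le> b \<Longrightarrow> alt b (altw b n)"
  unfolding alt_def altw_def
proof (intro allI impI)
  fix k assume b: "1 \<le> b" and k: "k + b < length (map (\<lambda>k. odd (k div b)) [0..<n])"
  have "b \<noteq> 0" using b by simp
  then have "(k+b) div b = Suc (k div b)" using div_add_self2[of b k] by simp
  then show "map (\<lambda>k. odd (k div b)) [0..<n] ! k \<noteq> map (\<lambda>k. odd (k div b)) [0..<n] ! (k + b)"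
    using k by (simp del: upt_Suc)
qed

lemma altw_len[simp]: "length (altw b n) = n" unfolding altw_def by simp


lemma SB1:
  fixes v :: "bool list"
  assumes "1 \<le> b" "b*s < length v"
  shows "card (SS b c s v) \<le> FF (length v - b*s - 1) s"
proof -
  have "card (SS b c s v) \<le> card (burst_dels b s (tl v))"
    by (rule card_mono[OF bd_fin S_sub[OF assms(1)]])
  also have "\<dots> \<le> FF (length (tl v) - b*s) s" by (rule D_ub[OF assms(1)]) (use assms(2) in simp)
  finally show ?thesis by simp
qed

lemma SB2:
  fixes v :: "bool list"
  assumes "1 \<le> b" "b * Suc s < length v" "c \<noteq> v!0"
  shows "card (SS b c (Suc s) v) \<le> FF (length v - b * Suc s - 1) s"
proof -
  obtain a v' where v: "v = a#v'" using assms(2) by (cases v) auto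
  have ca: "a \<noteq> c" using assms(3) v by simp
  have "SS b c (Suc s) v = SS b c s (drop b v)" using S_diff[OF assms(1) ca] v by simp
  moreover have "card (SS b c s (drop b v)) \<le> FF (length (drop b v) - b*s - 1) s"
    by (rule SB1[OF assms(1)]) (use assms(2) in simp)
  ultimately show ?thesis by (simp add: algebra_simps)
qed

lemma SB3:
  fixes v :: "bool list"
  assumes "1 \<le> b" "b * Suc s < length v" "c \<noteq> v!0" "c \<noteq> v!b"
  shows "card (SS b c (Suc s) v) \<le> (case s of 0 \<Rightarrow> 0 | Suc r \<Rightarrow> FF (length v - b * Suc s - 1) r)"
proof -
  obtain a v' where v: "v = a#v'" using assms(2) by (cases v) auto
  have ca: "a \<noteq> c" using assms(3) v by simp
  have bl: "b < length v" using assms(2) by simp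
  have e1: "SS b c (Suc s) v = SS b c s (drop b v)" using S_diff[OF assms(1) ca] v by simp
  have dv: "drop b v = v!b # drop (Suc b) v" using Cons_nth_drop_Suc[OF bl] by simp
  show ?thesis
  proof (cases s)
    case 0
    have "SS b c s (drop b v) = {}" using 0 dv assms(4) S_zero[of b c "drop b v"] by simp
    then show ?thesis using e1 0 by simp
  next
    case (Suc r)
    have "card (SS b c (Suc r) (drop b v)) \<le> FF (length (drop b v) - b * Suc r - 1) r"
      by (rule SB2[OF assms(1)]) (use assms(2,4) Suc dv in simp_all)
    then show ?thesis using e1 Suc by (simp add: algebra_simps)
  qed
qed

lemma FF_A1: "FF (Suc M) (Suc s) = (Suc M choose Suc s) + FF M s + (case s of 0 \<Rightarrow> 0 | Suc r \<Rightarrow> FF M r)"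
proof (cases s)
  case 0 then show ?thesis by (simp add: FF_Suc)
next
  case (Suc r)
  have "FF (Suc M) (Suc (Suc r)) = FF M (Suc (Suc r)) + FF M (Suc r)" by (rule FF_pascal)
  moreover have "FF M (Suc (Suc r)) = FF M (Suc r) + (M choose Suc (Suc r))" by (rule FF_Suc)
  moreover have "FF M (Suc r) = FF M r + (M choose Suc r)" by (rule FF_Suc)
  moreover have "(Suc M choose Suc (Suc r)) = (M choose Suc r) + (M choose Suc (Suc r))" by simp
  ultimately show ?thesis using Suc by simp
qed

lemma I_split:
  fixes x y :: "bool list"
  assumes "1 \<le> b" "b*t < length x"
  shows "card (burst_dels b t x \<inter> burst_dels b t y) =
    card (SS b a t x \<inter> SS b a t y) + card (SS b (\<not>a) t x \<inter> SS b (\<not>a) t y)"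
proof -
  have ne: "[] \<notin> burst_dels b t x \<inter> burst_dels b t y" using bd_len assms(2) by fastforce
  have fin: "finite (burst_dels b t x \<inter> burst_dels b t y)" using bd_fin by blast
  have e: "{z. c#z \<in> burst_dels b t x \<inter> burst_dels b t y} = SS b c t x \<inter> SS b c t y" for c
    unfolding SS_def by auto
  show ?thesis using card_split2[OF fin ne, of a] unfolding e .
qed

lemma Lk:
  fixes x y :: "bool list"
  assumes "1 \<le> b" "1 \<le> t" "k < b" "length x = n" "length y = n" "b*t \<le> n" "x \<noteq> y"
    "drop (b-k) x = drop (b-k) y"
  shows "card (burst_dels b t x \<inter> burst_dels b t y) + ((n - b*t + 1 + k - b) choose t) \<le> FF (n - b*t) t"
  using assms(3-8)
proof (induction n arbitrary: k x y)
  case 0 then show ?case using assms(1,2) by (simp add: Suc_le_eq)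
next
  case (Suc n')
  show ?case
  proof (cases "b*t = Suc n'")
    case True
    have "card (burst_dels b t x \<inter> burst_dels b t y) \<le> card (burst_dels b t x)"
      by (rule card_mono[OF bd_fin]) blast
    also have "\<dots> = 1" using bd_single[of b t x] True Suc.prems by simp
    finally have c1: "card (burst_dels b t x \<inter> burst_dels b t y) \<le> 1" .
    have c0: "(0 choose t) = 0" using assms(2) by (cases t) simp_all
    have e: "Suc n' - b*t + 1 + k - b = 0" using True Suc.prems by simp
    have e2: "Suc n' - b*t = 0" using True by simp
    have e3: "(Suc n' - b*t + 1 + k - b choose t) = 0" by (simp only: e c0)
    have e4: "FF (Suc n' - b*t) t = 1" by (simp add: e2)
    show ?thesis using c1 e3 e4 by linarith
  next
    case False
    then have lt: "b*t \<le> n'" using Suc.prems by simp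
    obtain s where ts: "t = Suc s" using assms(2) by (cases t) auto
    obtain a x' where x: "x = a#x'" using Suc.prems by (cases x) auto
    obtain c y' where y: "y = c#y'" using Suc.prems by (cases y) auto
    define M where "M = n' - b*t"
    have m: "Suc n' - b*t = Suc M" using lt M_def by simp
    have ltx: "b*t < length x" using Suc.prems lt by simp
    have split: "card (burst_dels b t x \<inter> burst_dels b t y) =
      card (SS b a t x \<inter> SS b a t y) + card (SS b (\<not>a) t x \<inter> SS b (\<not>a) t y)"
      by (rule I_split[OF assms(1) ltx])
    show ?thesis
    proof (cases "a = c")
      case True
      have xy': "x' \<noteq> y'" using Suc.prems(5) x y True by simp
      have k1: "k + 1 < b"
      proof (rule ccontr)
        assume "\<not> k + 1 < b"
        then have "b - k = 1" using Suc.prems(1) by simp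
        then have "x' = y'" using Suc.prems(6) x y by simp
        then show False using xy' by simp
      qed
      have bk: "b - k = Suc (b - (k+1))" using k1 by simp
      have dr: "drop (b - (k+1)) x' = drop (b - (k+1)) y'" using Suc.prems(6) x y bk by simp
      have IH: "card (burst_dels b t x' \<inter> burst_dels b t y') + ((n' - b*t + 1 + (k+1) - b) choose t)
          \<le> FF (n' - b*t) t"
        by (rule Suc.IH[OF k1 _ _ lt xy' dr]) (use Suc.prems x y in simp_all)
      have e1: "SS b a t x \<inter> SS b a t y = burst_dels b t x' \<inter> burst_dels b t y'"
        using S_same[OF assms(1), of a t x'] S_same[OF assms(1), of a t y'] x y True by simp
      have "card (SS b (\<not>a) t x \<inter> SS b (\<not>a) t y) \<le> card (SS b (\<not>a) t x)"
        by (rule card_mono[OF SS_fin]) blast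
      also have "\<dots> \<le> FF (length x - b * Suc s - 1) s"
        using SB2[OF assms(1), of s x "\<not>a"] ltx ts x by simp
      finally have c2: "card (SS b (\<not>a) t x \<inter> SS b (\<not>a) t y) \<le> FF M s"
        using Suc.prems x ts M_def by simp
      have eqc: "n' - b*t + 1 + (k+1) - b = Suc n' - b*t + 1 + k - b" using lt by simp
      have "card (burst_dels b t x \<inter> burst_dels b t y) + ((Suc n' - b*t + 1 + k - b) choose t)
          \<le> FF M t + FF M s" using split e1 IH c2 eqc M_def by simp
      also have "\<dots> = FF (Suc n' - b*t) t" using m ts FF_pascal by simp
      finally show ?thesis .
    next
      case False
      then have c: "c = (\<not>a)" by simp
      have bln: "b < Suc n'" using lt assms(2) ts by (simp add: Suc_le_eq le_less_trans)
      have xbyb: "x!b = y!b"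
      proof -
        have "k < length (drop (b-k) x)" using bln Suc.prems by simp
        have d: "drop (b-k) x ! k = drop (b-k) y ! k" using Suc.prems(6) by simp
        have ex: "drop (b-k) x ! k = x ! b" using Suc.prems(1,2) bln by simp
        have ey: "drop (b-k) y ! k = y ! b" using Suc.prems(1,3) bln by simp
        show ?thesis using d ex ey by simp
      qed
      have bnd: "card (SS b a t x \<inter> SS b a t y) + card (SS b (\<not>a) t x \<inter> SS b (\<not>a) t y)
          \<le> FF M s + (case s of 0 \<Rightarrow> 0 | Suc r \<Rightarrow> FF M r)"
      proof -
        have i1: "card (SS b a t x \<inter> SS b a t y) \<le> card (SS b a t y)"
          by (rule card_mono[OF SS_fin]) blast
        have i2: "card (SS b (\<not>a) t x \<inter> SS b (\<not>a) t y) \<le> card (SS b (\<not>a) t x)"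
          by (rule card_mono[OF SS_fin]) blast
        have lty: "b * Suc s < length y" using ltx ts Suc.prems by simp
        have ltx': "b * Suc s < length x" using ltx ts by simp
        have ly: "length y - b * Suc s - 1 = M" using Suc.prems ts M_def by simp
        have lx: "length x - b * Suc s - 1 = M" using Suc.prems ts M_def by simp
        show ?thesis
        proof (cases "x!b = a")
          case True
          have p0: "a \<noteq> y!0" using y c by simp
          have "card (SS b a (Suc s) y) \<le> FF (length y - b * Suc s - 1) s"
            by (rule SB2[OF assms(1) lty p0])
          then have "card (SS b a (Suc s) y) \<le> FF M s" unfolding ly .
          moreover
          have p1: "(\<not>a) \<noteq> x!0" using x by simp
          have p2: "(\<not>a) \<noteq> x!b" using True by simp
          have "card (SS b (\<not>a) (Suc s) x) \<le> (case s of 0 \<Rightarrow> 0 | Suc r \<Rightarrow> FF (length x - b * Suc s - 1) r)"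
            by (rule SB3[OF assms(1) ltx' p1 p2])
          then have "card (SS b (\<not>a) (Suc s) x) \<le> (case s of 0 \<Rightarrow> 0 | Suc r \<Rightarrow> FF M r)" unfolding lx .
          ultimately show ?thesis using i1 i2 ts by simp
        next
          case False
          then have xb: "x!b = (\<not>a)" by simp
          have p0: "(\<not>a) \<noteq> x!0" using x by simp
          have "card (SS b (\<not>a) (Suc s) x) \<le> FF (length x - b * Suc s - 1) s"
            by (rule SB2[OF assms(1) ltx' p0])
          then have "card (SS b (\<not>a) (Suc s) x) \<le> FF M s" unfolding lx .
          moreover
          have p1: "a \<noteq> y!0" using y c by simp
          have p2: "a \<noteq> y!b" using xb xbyb by simp
          have "card (SS b a (Suc s) y) \<le> (case s of 0 \<Rightarrow> 0 | Suc r \<Rightarrow> FF (length y - b * Suc s - 1) r)"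
            by (rule SB3[OF assms(1) lty p1 p2])
          then have "card (SS b a (Suc s) y) \<le> (case s of 0 \<Rightarrow> 0 | Suc r \<Rightarrow> FF M r)" unfolding ly .
          ultimately show ?thesis using i1 i2 ts by simp
        qed
      qed
      have "((Suc n' - b*t + 1 + k - b) choose t) \<le> (Suc M choose t)"
        using m Suc.prems(1) by (intro binomial_right_mono) simp
      then have "card (burst_dels b t x \<inter> burst_dels b t y) + ((Suc n' - b*t + 1 + k - b) choose t)
          \<le> FF M s + (case s of 0 \<Rightarrow> 0 | Suc r \<Rightarrow> FF M r) + (Suc M choose Suc s)"
        using split bnd ts by simp
      also have "\<dots> = FF (Suc M) (Suc s)" using FF_A1[of M s] by simp
      finally show ?thesis using m ts by simp
    qed
  qed
qed


lemma S_sub2: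
  fixes v :: "bool list"
  assumes "1 \<le> b" "c \<noteq> v!0" "v \<noteq> []"
  shows "SS b c (Suc s) v \<subseteq> burst_dels b s (drop (Suc b) v)"
proof -
  obtain a v' where v: "v = a#v'" using assms(3) by (cases v) auto
  have ca: "a \<noteq> c" using assms(2) v by simp
  have "SS b c (Suc s) v = SS b c s (drop b v)" using S_diff[OF assms(1) ca] v by simp
  also have "\<dots> \<subseteq> burst_dels b s (tl (drop b v))" by (rule S_sub[OF assms(1)])
  also have "tl (drop b v) = drop (Suc b) v" by (simp add: drop_Suc drop_tl)
  finally show ?thesis .
qed

lemma U:
  fixes x y :: "bool list"
  assumes "2 \<le> b" "1 \<le> t" "length x = n" "length y = n" "b*t + b \<le> n + 1" "x \<noteq> y"
  shows "card (burst_dels b t x \<inter> burst_dels b t y) + ((n - b*t + 1 - b) choose t) \<le> FF (n - b*t) t"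
  using assms(2-6)
proof (induction n arbitrary: t x y rule: less_induct)
  case (less n)
  have b1: "1 \<le> b" using assms(1) by simp
  show ?case
  proof (cases "drop b x = drop b y")
    case True
    have "card (burst_dels b t x \<inter> burst_dels b t y) + ((n - b*t + 1 + 0 - b) choose t) \<le> FF (n - b*t) t"
      by (rule Lk[OF b1 less.prems(1) _ less.prems(2,3) _ less.prems(5)]) (use True less.prems assms(1) in simp_all)
    then show ?thesis by simp
  next
    case dne: False
    show ?thesis
    proof (cases "n + 1 = b*t + b")
      case True
      have "card (burst_dels b t x \<inter> burst_dels b t y) \<le> card (burst_dels b t x)"
        by (rule card_mono[OF bd_fin]) blast
      also have "\<dots> \<le> FF (n - b*t) t" using D_ub[OF b1, of t x] less.prems assms(1) by simp
      finally have c1: "card (burst_dels b t x \<inter> burst_dels b t y) \<le> FF (n - b*t) t" .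
      have "n - b*t + 1 - b = 0" using True assms(1) by linarith
      moreover have "(0 choose t) = 0" using less.prems(1) by (cases t) simp_all
      ultimately have "((n - b*t + 1 - b) choose t) = 0" by (simp only:)
      then show ?thesis using c1 by linarith
    next
      case False
      then have ge: "b*t + b \<le> n" using less.prems(4) by simp
      obtain s where ts: "t = Suc s" using less.prems(1) by (cases t) auto
      obtain n' where nn: "n = Suc n'" using ge assms(1) by (cases n) auto
      obtain a x' where x: "x = a#x'" using less.prems nn by (cases x) auto
      obtain c y' where y: "y = c#y'" using less.prems nn by (cases y) auto
      define M where "M = n' - b*t"
      have bM: "b \<le> Suc M" using ge nn M_def assms(1) by linarith
      have m: "n - b*t = Suc M" using ge nn M_def assms(1) by linarith
      have ltx: "b*t < length x" using less.prems ge assms(1) by simp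
      have lty: "b * Suc s < length y" using less.prems ge assms(1) ts by simp
      have ltx': "b * Suc s < length x" using ltx ts by simp
      have lx: "length x - b * Suc s - 1 = M" using less.prems ts M_def nn by simp
      have ly: "length y - b * Suc s - 1 = M" using less.prems ts M_def nn by simp
      have split: "card (burst_dels b t x \<inter> burst_dels b t y) =
        card (SS b a t x \<inter> SS b a t y) + card (SS b (\<not>a) t x \<inter> SS b (\<not>a) t y)"
        by (rule I_split[OF b1 ltx])
      have ce: "n - b*t + 1 - b = Suc (M + 1 - b)" using bM m by simp
      show ?thesis
      proof (cases "a = c")
        case False
        then have c: "c = (\<not>a)" by simp
        have p0: "a \<noteq> y!0" using y c by simp
        have "card (SS b a t x \<inter> SS b a t y) \<le> card (SS b a (Suc s) y)"
          using ts by (intro card_mono[OF SS_fin]) blast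
        also have "\<dots> \<le> FF (length y - b * Suc s - 1) s" by (rule SB2[OF b1 lty p0])
        finally have i1: "card (SS b a t x \<inter> SS b a t y) \<le> FF M s" unfolding ly .
        have p1: "(\<not>a) \<noteq> x!0" using x by simp
        have "card (SS b (\<not>a) t x \<inter> SS b (\<not>a) t y) \<le> card (SS b (\<not>a) (Suc s) x)"
          using ts by (intro card_mono[OF SS_fin]) blast
        also have "\<dots> \<le> FF (length x - b * Suc s - 1) s" by (rule SB2[OF b1 ltx' p1])
        finally have i2: "card (SS b (\<not>a) t x \<inter> SS b (\<not>a) t y) \<le> FF M s" unfolding lx .
        have "(Suc (M + 1 - b) choose t) \<le> (M choose t)"
          using assms(1) bM by (intro binomial_right_mono) simp
        moreover have "FF (Suc M) (Suc s) = FF M s + (M choose Suc s) + FF M s"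
          using FF_pascal[of M s] FF_Suc[of M s] by simp
        ultimately show ?thesis using split i1 i2 ts m ce by simp
      next
        case True
        have xy': "x' \<noteq> y'" using less.prems(5) x y True by simp
        have IH1: "card (burst_dels b t x' \<inter> burst_dels b t y') + ((n' - b*t + 1 - b) choose t) \<le> FF (n' - b*t) t"
          by (rule less.IH[of n' t x' y']) (use nn less.prems x y xy' ge in simp_all)
        have e1: "SS b a t x \<inter> SS b a t y = burst_dels b t x' \<inter> burst_dels b t y'"
          using S_same[OF b1, of a t x'] S_same[OF b1, of a t y'] x y True by simp
        have IH1': "card (SS b a t x \<inter> SS b a t y) + ((M + 1 - b) choose Suc s) \<le> FF M (Suc s)"
          using IH1 e1 ts M_def by simp
        have bin: "(Suc (M + 1 - b) choose Suc s) = ((M + 1 - b) choose Suc s) + ((M + 1 - b) choose s)"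
          by simp
        show ?thesis
        proof (cases "drop (Suc b) x = drop (Suc b) y")
          case False
          have p1: "(\<not>a) \<noteq> x!0" using x by simp
          have p2: "(\<not>a) \<noteq> y!0" using y True by simp
          have sub: "SS b (\<not>a) t x \<inter> SS b (\<not>a) t y \<subseteq>
              burst_dels b s (drop (Suc b) x) \<inter> burst_dels b s (drop (Suc b) y)"
            using S_sub2[OF b1 p1, of s] S_sub2[OF b1 p2, of s] x y ts by auto
          have J: "card (SS b (\<not>a) t x \<inter> SS b (\<not>a) t y) + ((M + 1 - b) choose s) \<le> FF M s"
          proof (cases s)
            case 0
            have "burst_dels b s (drop (Suc b) x) \<inter> burst_dels b s (drop (Suc b) y) = {}"
              using 0 False by simp
            then have "SS b (\<not>a) t x \<inter> SS b (\<not>a) t y = {}" using sub by blast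
            then show ?thesis using 0 by simp
          next
            case (Suc r)
            have "card (burst_dels b s (drop (Suc b) x) \<inter> burst_dels b s (drop (Suc b) y))
                + ((n - Suc b - b*s + 1 - b) choose s) \<le> FF (n - Suc b - b*s) s"
              by (rule less.IH) (use Suc less.prems ge False ts assms(1) in simp_all)
            moreover have "n - Suc b - b*s = M" using ts nn M_def by simp
            moreover have "card (SS b (\<not>a) t x \<inter> SS b (\<not>a) t y) \<le>
                card (burst_dels b s (drop (Suc b) x) \<inter> burst_dels b s (drop (Suc b) y))"
              by (rule card_mono[OF _ sub]) (simp add: bd_fin)
            ultimately show ?thesis by simp
          qed
          have "FF (Suc M) (Suc s) = FF M (Suc s) + FF M s" by (rule FF_pascal)
          then show ?thesis using split IH1' J bin ts m ce by simp
        next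
          case dS: True
          have bl: "b < length x" "b < length y" using ltx lty ts by simp_all
          have "drop b x = x!b # drop (Suc b) x" using Cons_nth_drop_Suc[OF bl(1)] by simp
          moreover have "drop b y = y!b # drop (Suc b) y" using Cons_nth_drop_Suc[OF bl(2)] by simp
          ultimately have xyb: "x!b \<noteq> y!b" using dne dS by auto
          have J: "card (SS b (\<not>a) t x \<inter> SS b (\<not>a) t y) \<le> (case s of 0 \<Rightarrow> 0 | Suc r \<Rightarrow> FF M r)"
          proof (cases "x!b = a")
            case xa: True
            have p1: "(\<not>a) \<noteq> x!0" using x by simp
            have p2: "(\<not>a) \<noteq> x!b" using xa by simp
            have "card (SS b (\<not>a) t x \<inter> SS b (\<not>a) t y) \<le> card (SS b (\<not>a) (Suc s) x)"
              using ts by (intro card_mono[OF SS_fin]) blast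
            also have "\<dots> \<le> (case s of 0 \<Rightarrow> 0 | Suc r \<Rightarrow> FF (length x - b * Suc s - 1) r)"
              by (rule SB3[OF b1 ltx' p1 p2])
            finally show ?thesis unfolding lx .
          next
            case xa: False
            have p1: "(\<not>a) \<noteq> y!0" using y True by simp
            have p2: "(\<not>a) \<noteq> y!b" using xa xyb by auto
            have "card (SS b (\<not>a) t x \<inter> SS b (\<not>a) t y) \<le> card (SS b (\<not>a) (Suc s) y)"
              using ts by (intro card_mono[OF SS_fin]) blast
            also have "\<dots> \<le> (case s of 0 \<Rightarrow> 0 | Suc r \<Rightarrow> FF (length y - b * Suc s - 1) r)"
              by (rule SB3[OF b1 lty p1 p2])
            finally show ?thesis unfolding ly .
          qed
          have A1: "FF (Suc M) (Suc s) = (Suc M choose Suc s) + FF M s + (case s of 0 \<Rightarrow> 0 | Suc r \<Rightarrow> FF M r)"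
            by (rule FF_A1)
          have "FF M (Suc s) = FF M s + (M choose Suc s)" by (rule FF_Suc)
          moreover have "((M + 1 - b) choose s) \<le> (M choose s)"
            using assms(1) by (intro binomial_right_mono) simp
          moreover have "(Suc M choose Suc s) = (M choose s) + (M choose Suc s)" by simp
          ultimately show ?thesis using split IH1' J bin ts m ce A1 by simp
        qed
      qed
    qed
  qed
qed


lemma card_SS_alt:
  fixes v :: "bool list"
  assumes "1 \<le> b" "alt b v" "b * Suc s < length v" "c \<noteq> v!0"
  shows "card (SS b c (Suc s) v) = FF (length v - b * Suc s - 1) s"
proof -
  have "card (SS b c (Suc s) v) = card (burst_dels b s (drop (Suc b) v))"
    using S_alt_eq[OF assms] by simp
  also have "\<dots> = FF (length (drop (Suc b) v) - b*s) s"
    by (rule D_exact[OF assms(1) alt_drop[OF assms(2)]]) (use assms(3) in simp)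
  finally show ?thesis by (simp add: algebra_simps)
qed

lemma E:
  fixes u :: "bool list"
  assumes "1 \<le> b" "1 \<le> t" "p < b" "alt b u" "length u = n" "b*t + p \<le> n"
  shows "FF (n - b*t) t \<le> card (burst_dels b t u \<inter> burst_dels b t (u[p := \<not> u!p])) + ((n - b*t - p) choose t)"
  using assms(3-6)
proof (induction p arbitrary: u n)
  case 0
  show ?case
  proof (cases "b*t = n")
    case True
    have "burst_dels b t u = {[]}" using bd_single[of b t u] True 0 by simp
    moreover have "burst_dels b t (u[0 := \<not> u!0]) = {[]}" using bd_single[of b t "u[0 := \<not> u!0]"] True 0 by simp
    ultimately show ?thesis using True by simp
  next
    case False
    then have lt: "b*t < n" using 0 by simp
    obtain s where ts: "t = Suc s" using assms(2) by (cases t) auto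
    obtain a u' where u: "u = a#u'" using lt 0 by (cases u) auto
    define v where "v = u[0 := \<not> u!0]"
    have v: "v = (\<not>a) # u'" using u v_def by simp
    define M where "M = n - b*t - 1"
    have m: "n - b*t = Suc M" using lt M_def by simp
    have ltu: "b*t < length u" using lt 0 by simp
    have split: "card (burst_dels b t u \<inter> burst_dels b t v) =
        card (SS b a t u \<inter> SS b a t v) + card (SS b (\<not>a) t u \<inter> SS b (\<not>a) t v)"
      by (rule I_split[OF assms(1) ltu])
    have e1: "SS b a t u \<inter> SS b a t v = SS b a t v"
      using S_sub[OF assms(1), of a t v] S_same[OF assms(1), of a t u'] u v by auto
    have e2: "SS b (\<not>a) t u \<inter> SS b (\<not>a) t v = SS b (\<not>a) t u"
      using S_sub[OF assms(1), of "\<not>a" t u] S_same[OF assms(1), of "\<not>a" t u'] u v by auto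
    have c2: "card (SS b (\<not>a) t u) = FF M s"
    proof -
      have lu: "length u = n" using 0 by simp
      have "card (SS b (\<not>a) t u) = FF (length u - b * Suc s - 1) s"
        using card_SS_alt[OF assms(1) 0(2), of s "\<not>a"] ltu ts u by simp
      then show ?thesis unfolding lu M_def ts by simp
    qed
    have bl: "b < length u" using ltu ts by simp
    have dv: "drop b v = drop b u" using v u assms(1) by (cases b) simp_all
    have du: "drop b u = u!b # drop (Suc b) u" using Cons_nth_drop_Suc[OF bl] by simp
    have bl0: "0 + b < length u" using bl by simp
    have "u!0 \<noteq> u!(0+b)" using 0(2) bl0 unfolding alt_def by blast
    then have ub: "u!b = (\<not>a)" using u by auto
    have e3: "SS b a t v = SS b a s (drop b u)"
      using S_diff[of b "\<not>a" a s u'] assms(1) ts v dv by simp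
    have c1: "card (SS b a t v) = (case s of 0 \<Rightarrow> 0 | Suc r \<Rightarrow> FF M r)"
    proof (cases s)
      case 0
      have "SS b a s (drop b u) = {}" using 0 du ub S_zero[of b a "drop b u"] by simp
      then show ?thesis using e3 0 by simp
    next
      case (Suc r)
      have "card (SS b a (Suc r) (drop b u)) = FF (length (drop b u) - b * Suc r - 1) r"
        by (rule card_SS_alt[OF assms(1) alt_drop[OF 0(2)]]) (use ltu ts Suc du ub in simp_all)
      then show ?thesis using e3 Suc 0 M_def ts by (simp add: algebra_simps)
    qed
    have "FF (Suc M) (Suc s) = (Suc M choose Suc s) + FF M s + (case s of 0 \<Rightarrow> 0 | Suc r \<Rightarrow> FF M r)"
      by (rule FF_A1)
    then show ?thesis using split e1 e2 c1 c2 m ts v_def by simp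
  qed
next
  case (Suc p')
  obtain s where ts: "t = Suc s" using assms(2) by (cases t) auto
  have lt: "b*t < n" using Suc.prems by simp
  obtain a u' where u: "u = a#u'" using lt Suc.prems by (cases u) auto
  define v' where "v' = u'[p' := \<not> u'!p']"
  have v: "u[Suc p' := \<not> u!Suc p'] = a # v'" using u v'_def by simp
  define M where "M = n - b*t - 1"
  have m: "n - b*t = Suc M" using lt M_def by simp
  have ltu: "b*t < length u" using lt Suc.prems by simp
  have split: "card (burst_dels b t u \<inter> burst_dels b t (a # v')) =
      card (SS b a t u \<inter> SS b a t (a # v')) + card (SS b (\<not>a) t u \<inter> SS b (\<not>a) t (a # v'))"
    by (rule I_split[OF assms(1) ltu])
  have e1: "SS b a t u \<inter> SS b a t (a # v') = burst_dels b t u' \<inter> burst_dels b t v'"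
    using S_same[OF assms(1), of a t u'] S_same[OF assms(1), of a t v'] u by simp
  have IH: "FF (n - 1 - b*t) t \<le> card (burst_dels b t u' \<inter> burst_dels b t v') + ((n - 1 - b*t - p') choose t)"
    unfolding v'_def
    by (rule Suc.IH) (use Suc.prems u alt_drop[OF Suc.prems(2), of 1] in simp_all)
  have dd: "drop b (a#u') = drop b (a#v')" unfolding v'_def using Suc.prems(1) by (cases b) simp_all
  have e2: "SS b (\<not>a) t u = SS b (\<not>a) t (a # v')"
    using S_diff[of b a "\<not>a" s u'] S_diff[of b a "\<not>a" s v'] assms(1) ts u dd
    by simp
  have c2: "card (SS b (\<not>a) t u) = FF M s"
  proof -
    have lu: "length u = n" using Suc.prems by simp
    have "card (SS b (\<not>a) t u) = FF (length u - b * Suc s - 1) s"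
      using card_SS_alt[OF assms(1) Suc.prems(2), of s "\<not>a"] ltu ts u by simp
    then show ?thesis unfolding lu M_def ts by simp
  qed
  have "FF (Suc M) (Suc s) = FF M (Suc s) + FF M s" by (rule FF_pascal)
  moreover have "n - 1 - b*t = M" "n - 1 - b*t - p' = n - b*t - Suc p'" using M_def by simp_all
  ultimately show ?case using split e1 e2 c2 IH m ts v by simp
qed


lemma fin_len: "finite {x :: bool list. length x = M}"
  using finite_lists_length_eq[of "UNIV :: bool set" M] by simp

lemma Dmax_val:
  assumes "1 \<le> b" "b*s \<le> M"
  shows "Dmax b (int M) (int s) = FF (M - b*s) s"
proof (cases "b*s = M")
  case True
  have "int (b*s) = int M" using True by (simp only:)
  then have "int M = int b * int s" by simp
  then show ?thesis unfolding Dmax_def using True by simp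
next
  case False
  have i: "int b * int s = int (b*s)" by simp
  have c1: "\<not> (int s < 0 \<or> int M < int b * int s)" unfolding i using assms(2) by linarith
  have c2: "int M \<noteq> int b * int s" unfolding i using False by linarith
  define A where "A = {card (burst_dels b s x) | x :: bool list. length x = M}"
  have finA: "finite A"
  proof -
    have "A = (\<lambda>x. card (burst_dels b s x)) ` {x :: bool list. length x = M}" unfolding A_def by auto
    then show ?thesis using fin_len by simp
  qed
  have ub: "\<forall>y\<in>A. y \<le> FF (M - b*s) s"
  proof
    fix y assume "y \<in> A"
    then obtain x :: "bool list" where "y = card (burst_dels b s x)" "length x = M" unfolding A_def by auto
    then show "y \<le> FF (M - b*s) s" using D_ub[OF assms(1), of s x] assms(2) by simp
  qed
  have "card (burst_dels b s (altw b M)) = FF (M - b*s) s"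
    using D_exact[OF assms(1) altw_alt[OF assms(1)], of s M] assms(2) by simp
  then have mem: "FF (M - b*s) s \<in> A"
    unfolding A_def by (metis (mono_tags, lifting) altw_len mem_Collect_eq)
  have "Max A = FF (M - b*s) s" by (rule Max_eqI[OF finA]) (use ub mem in auto)
  then show ?thesis unfolding Dmax_def using c1 c2 A_def by simp
qed

lemma Nminus_val:
  assumes "2 \<le> b" "1 \<le> t" "b*t + b \<le> n + 1"
  shows "Nminus b n t + ((n - b*t + 1 - b) choose t) = FF (n - b*t) t"
proof -
  have b1: "1 \<le> b" using assms(1) by simp
  define A where "A = {card (burst_dels b t x \<inter> burst_dels b t y) | x y :: bool list.
      length x = n \<and> length y = n \<and> x \<noteq> y}"
  define C where "C = ((n - b*t + 1 - b) choose t)"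
  have finA: "finite A"
  proof -
    have "A \<subseteq> (\<lambda>(x,y). card (burst_dels b t x \<inter> burst_dels b t y)) ` ({x :: bool list. length x = n} \<times> {y :: bool list. length y = n})"
    proof
      fix w assume "w \<in> A"
      then obtain x y :: "bool list" where w: "w = card (burst_dels b t x \<inter> burst_dels b t y)"
        "length x = n" "length y = n" unfolding A_def by auto
      show "w \<in> (\<lambda>(x,y). card (burst_dels b t x \<inter> burst_dels b t y)) ` ({x :: bool list. length x = n} \<times> {y :: bool list. length y = n})"
        using w by force
    qed
    then show ?thesis by (rule finite_subset) (simp add: fin_len)
  qed
  have ub: "\<forall>y\<in>A. y \<le> FF (n - b*t) t - C"
  proof
    fix w assume "w \<in> A"
    then obtain x y :: "bool list" where "w = card (burst_dels b t x \<inter> burst_dels b t y)"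
      "length x = n" "length y = n" "x \<noteq> y" unfolding A_def by auto
    then have "card (burst_dels b t x \<inter> burst_dels b t y) + C \<le> FF (n - b*t) t"
      using U[OF assms(1,2) _ _ assms(3)] unfolding C_def by blast
    then show "w \<le> FF (n - b*t) t - C" using \<open>w = _\<close> by simp
  qed
  define u where "u = altw b n"
  define v where "v = u[b-1 := \<not> u!(b-1)]"
  have lu: "length u = n" "length v = n" unfolding u_def v_def by simp_all
  have bn: "b - 1 < n" using assms by (cases t) auto
  have uv: "u \<noteq> v"
  proof
    assume "u = v"
    then have "u!(b-1) = v!(b-1)" by simp
    then show False unfolding v_def using bn lu by simp
  qed
  have E1: "FF (n - b*t) t \<le> card (burst_dels b t u \<inter> burst_dels b t v) + ((n - b*t - (b-1)) choose t)"
    unfolding v_def by (rule E[OF b1 assms(2)]) (use assms u_def altw_alt[OF b1] in simp_all)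
  have eqn: "n - b*t - (b-1) = n - b*t + 1 - b" using assms by simp
  have E2: "FF (n - b*t) t \<le> card (burst_dels b t u \<inter> burst_dels b t v) + C"
    using E1 unfolding eqn C_def .
  have U2: "card (burst_dels b t u \<inter> burst_dels b t v) + C \<le> FF (n - b*t) t"
    using U[OF assms(1,2) lu assms(3) uv] C_def by simp
  have memA: "card (burst_dels b t u \<inter> burst_dels b t v) \<in> A" unfolding A_def using lu uv by blast
  have eq: "card (burst_dels b t u \<inter> burst_dels b t v) = FF (n - b*t) t - C" using E2 U2 by simp
  have "Max A = FF (n - b*t) t - C" by (rule Max_eqI[OF finA]) (use ub memA eq in auto)
  then have "Nminus b n t = FF (n - b*t) t - C" unfolding Nminus_def A_def by simp
  then show ?thesis using E2 U2 C_def by simp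
qed

lemma FF_A2: "FF K (Suc s) = (Suc K choose Suc s) + (case s of 0 \<Rightarrow> 0 | Suc r \<Rightarrow> FF K r)"
proof (cases s)
  case 0 then show ?thesis by (simp add: FF_Suc)
next
  case (Suc r)
  have "FF K (Suc (Suc r)) = FF K (Suc r) + (K choose Suc (Suc r))" by (rule FF_Suc)
  moreover have "FF K (Suc r) = FF K r + (K choose Suc r)" by (rule FF_Suc)
  moreover have "(Suc K choose Suc (Suc r)) = (K choose Suc r) + (K choose Suc (Suc r))" by simp
  ultimately show ?thesis using Suc by simp
qed

theorem theorem4p10:
  fixes b t n :: nat
  assumes "b \<ge> 2" and "t \<ge> 1" and "n + 1 \<ge> (t + 1) * b"
  shows "int (Nminus b n t) = int (Dmax b (int n) (int t)) - int (Dmax b (int n - int b) (int t))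
           + int (Dmax b (int n - 3 * int b) (int t - 2))
       \<and> int (Nminus b n t) = int (Dmax b (int n) (int t)) - int ((n + 1 - (t + 1) * b) choose t)
       \<and> Dmax b (int n) (int t) = (\<Sum>i = 0..t. (n - b * t) choose i)"
proof -
  have b1: "1 \<le> b" using assms(1) by simp
  have h3: "b*t + b \<le> n + 1" using assms(3) by (simp add: algebra_simps)
  define m where "m = n - b*t"
  have btn: "b*t \<le> n" using h3 assms(1) by linarith
  have N: "Nminus b n t + ((m + 1 - b) choose t) = FF m t"
    using Nminus_val[OF assms(1,2) h3] m_def by simp
  have D: "Dmax b (int n) (int t) = FF m t" using Dmax_val[OF b1 btn] m_def by simp
  have e0: "(t + 1) * b = b*t + b" by (simp add: algebra_simps)
  have e1: "n + 1 - (t + 1) * b = m + 1 - b" unfolding e0 using h3 btn m_def by linarith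
  have P3: "Dmax b (int n) (int t) = (\<Sum>i = 0..t. (n - b * t) choose i)"
    using D m_def FF_def by simp
  have P2: "int (Nminus b n t) = int (Dmax b (int n) (int t)) - int ((n + 1 - (t + 1) * b) choose t)"
    using N D e1 by simp
  obtain s where ts: "t = Suc s" using assms(2) by (cases t) auto
  have P1: "int (Nminus b n t) = int (Dmax b (int n) (int t)) - int (Dmax b (int n - int b) (int t))
           + int (Dmax b (int n - 3 * int b) (int t - 2))"
  proof (cases "b*t + b \<le> n")
    case False
    then have nb: "n + 1 = b*t + b" using h3 by simp
    have z1: "Dmax b (int n - int b) (int t) = 0"
    proof -
      have "int (n + 1) = int (b*t + b)" using nb by (simp only:)
      then have i1: "int n + 1 = int b * int t + int b" by simp
      have "int n - int b < int b * int t" using i1 by linarith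
      then show ?thesis unfolding Dmax_def by simp
    qed
    have z2: "Dmax b (int n - 3 * int b) (int t - 2) = 0"
    proof -
      have "int n - 3 * int b < int b * (int t - 2)"
      proof -
        have "int (n + 1) = int (b*t + b)" using nb by (simp only:)
        then have i1: "int n + 1 = int b * int t + int b" by simp
        have i2: "int b * (int t - 2) = int b * int t - 2 * int b" by (simp add: algebra_simps)
        show ?thesis unfolding i2 using i1 by linarith
      qed
      then show ?thesis unfolding Dmax_def by simp
    qed
    have "m + 1 - b = 0" using nb m_def btn by linarith
    moreover have "(0 choose t) = 0" using assms(2) by (cases t) simp_all
    ultimately have c0: "((m + 1 - b) choose t) = 0" by (simp only:)
    have "Nminus b n t = FF m t" using N unfolding c0 by simp
    then show ?thesis using D z1 z2 by simp
  next
    case True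
    define K where "K = m - b"
    have mK: "m + 1 - b = Suc K" using True m_def K_def by simp
    have d1: "Dmax b (int n - int b) (int t) = FF K t"
    proof -
      have "b \<le> n" using True by simp
      then have e: "int n - int b = int (n - b)" by (simp add: of_nat_diff)
      have bt': "b*t \<le> n - b" using True by linarith
      have "Dmax b (int (n - b)) (int t) = FF (n - b - b*t) t"
        by (rule Dmax_val[OF b1 bt'])
      moreover have "n - b - b*t = K" using K_def m_def by simp
      ultimately show ?thesis unfolding e by simp
    qed
    have d2: "Dmax b (int n - 3 * int b) (int t - 2) = (case s of 0 \<Rightarrow> 0 | Suc r \<Rightarrow> FF K r)"
    proof (cases s)
      case 0
      then have "int t - 2 < 0" using ts by simp
      then show ?thesis unfolding Dmax_def using 0 by simp
    next
      case (Suc r)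
      have tt: "t = Suc (Suc r)" using ts Suc by simp
      have btr: "b*t = 2*b + b*r" using tt by simp
      have ge3: "3*b + b*r \<le> n" using True btr by linarith
      have "3*b \<le> n" using ge3 by simp
      then have "int (n - 3*b) = int n - int (3*b)" by (rule of_nat_diff)
      then have e: "int n - 3 * int b = int (n - 3*b)" by simp
      have e2: "int t - 2 = int r" using tt by simp
      have br: "b*r \<le> n - 3*b" using ge3 by linarith
      have "Dmax b (int (n - 3*b)) (int r) = FF (n - 3*b - b*r) r"
        by (rule Dmax_val[OF b1 br])
      moreover have "n - 3*b - b*r = K" using K_def m_def btr True by linarith
      ultimately show ?thesis unfolding e e2 using Suc by simp
    qed
    have id: "FF K t = (Suc K choose t) + (case s of 0 \<Rightarrow> 0 | Suc r \<Rightarrow> FF K r)"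
      using FF_A2[of K s] ts by simp
    have "Nminus b n t + (Suc K choose t) = FF m t" using N mK by simp
    then have "int (Nminus b n t + (Suc K choose t)) = int (FF m t)" by (simp only:)
    then have n1: "int (Nminus b n t) + int (Suc K choose t) = int (FF m t)" by (simp only: of_nat_add)
    have "int (FF K t) = int ((Suc K choose t) + (case s of 0 \<Rightarrow> 0 | Suc r \<Rightarrow> FF K r))" using id by (simp only:)
    then have n2: "int (FF K t) = int (Suc K choose t) + int (case s of 0 \<Rightarrow> 0 | Suc r \<Rightarrow> FF K r)"
      by (simp only: of_nat_add)
    show ?thesis unfolding D d1 d2 using n1 n2 by linarith
  qed
  show ?thesis using P1 P2 P3 by blast
qed

end
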